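(* Let $\mathcal X$ be a projective arithmetic variety of absolute dimension $n$, $\overline{\mathcal L}$ an ample Hermitian line bundle on $\mathcal X$, $\overline{\mathcal M}$ a Hermitian vector bundle of rank $r$ on $\mathcal X$ and $\mathcal F$ a coherent subsheaf of $\mathcal M$. Let $\varepsilon_{\mathcal F}>0$ be such that for all sufficiently large $d$, $H^0(\mathcal X,\overline{\mathcal L}^{\otimes d}\otimes\mathcal F)$ has a $\mathbb Z$-basis consisting of sections of norm $<e^{-\varepsilon_{\mathcal F}d}$. Write $r_d=\mathrm{rk}_{\mathbb Z}H^0(\mathcal X,\overline{\mathcal L}^{\otimes d}\otimes\mathcal F)$ and \[ C_d=3^{r_d}\big(\pi e^{2\varepsilon_{\mathcal F}d}\big)^{-r_d/2}\int_{\pi e^{2\varepsilon_{\mathcal F}d}}^{+\infty}u^{r_d/2}e^{-u}\,du . \] Then for all sufficiently large $d$, \[ 0<h^1_\theta(\mathcal X,\overline{\mathcal L}^{\otimes d}\otimes\mathcal F)<\exp\big(h^1_\theta(\mathcal X,\overline{\mathcal L}^{\otimes d}\otimes\mathcal F)\big)-1\leq C_d, \] and moreover, for $d$ sufficiently large, $C_d<2\cdot 3^{r_d}e^{-\pi e^{2\varepsilon_{\mathcal F}d}}$.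
   Context: A projective arithmetic variety is an integral separated scheme of finite type, flat and projective over $\mathrm{Spec}\,\mathbb Z$. An ample Hermitian line bundle $\overline{\mathcal L}$: $\mathcal L$ ample, metric semipositive, and for $d\gg0$ $H^0(\mathcal X,\mathcal L^{\otimes d})$ generated by sections of sup norm $<1$. The lattice $H^0(\mathcal X,\overline{\mathcal L}^{\otimes d}\otimes\mathcal F)\subset H^0(\mathcal X,\overline{\mathcal L}^{\otimes d}\otimes\overline{\mathcal M})$ carries the sup norm induced by the metrics. For a lattice $\overline E=(E,\|\cdot\|)$, $h^0_\theta(\overline E)=\log\sum_{v\in E}e^{-\pi\|v\|^2}$ and $h^1_\theta(\overline E)=h^0_\theta(\overline E^\vee)$, where $\overline E^\vee=\mathrm{Hom}_{\mathbb Z}(E,\mathbb Z)$ with the dual norm. One writes $h^i_\theta(\mathcal X,\overline{\mathcal L}^{\otimes d}\otimes\mathcal F)=h^i_\theta(H^0(\mathcal X,\overline{\mathcal L}^{\otimes d}\otimes\mathcal F))$. *)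

theory Defs
  imports "HOL-Analysis.Analysis"
begin

text \<open>A rank-r lattice is modelled by Z^r inside R^r, with vectors encoded as
  functions nat to int / nat to real vanishing at indices \<ge> r.
  The lattice norm (e.g. the sup norm on global sections) is an arbitrary norm on R^r.\<close>

definition zvecs :: "nat \<Rightarrow> (nat \<Rightarrow> int) set" where
  "zvecs r = {v. \<forall>i\<ge>r. v i = 0}"

definition rvecs :: "nat \<Rightarrow> (nat \<Rightarrow> real) set" where
  "rvecs r = {x. \<forall>i\<ge>r. x i = 0}"

definition to_real :: "(nat \<Rightarrow> int) \<Rightarrow> (nat \<Rightarrow> real)" where
  "to_real v = (\<lambda>i. real_of_int (v i))"

definition is_norm_on :: "nat \<Rightarrow> ((nat \<Rightarrow> real) \<Rightarrow> real) \<Rightarrow> bool" where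
  "is_norm_on r N \<longleftrightarrow>
     (\<forall>x\<in>rvecs r. N x \<ge> 0 \<and> (N x = 0 \<longleftrightarrow> x = (\<lambda>_. 0))) \<and>
     (\<forall>x\<in>rvecs r. \<forall>c. N (\<lambda>i. c * x i) = \<bar>c\<bar> * N x) \<and>
     (\<forall>x\<in>rvecs r. \<forall>y\<in>rvecs r. N (\<lambda>i. x i + y i) \<le> N x + N y)"

text \<open>Dual lattice Hom(Z^r,Z) identified with Z^r via the dual basis; dual norm.\<close>
definition dual_norm :: "nat \<Rightarrow> ((nat \<Rightarrow> real) \<Rightarrow> real) \<Rightarrow> (nat \<Rightarrow> real) \<Rightarrow> real" where
  "dual_norm r N \<phi> = Sup {\<bar>\<Sum>i<r. \<phi> i * x i\<bar> | x. x \<in> rvecs r \<and> N x \<le> 1}"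

definition h0_theta :: "nat \<Rightarrow> ((nat \<Rightarrow> real) \<Rightarrow> real) \<Rightarrow> real" where
  "h0_theta r N = ln (infsum (\<lambda>v. exp (- pi * (N (to_real v))\<^sup>2)) (zvecs r))"

definition h1_theta :: "nat \<Rightarrow> ((nat \<Rightarrow> real) \<Rightarrow> real) \<Rightarrow> real" where
  "h1_theta r N = h0_theta r (dual_norm r N)"

definition has_short_basis :: "nat \<Rightarrow> ((nat \<Rightarrow> real) \<Rightarrow> real) \<Rightarrow> real \<Rightarrow> bool" where
  "has_short_basis r N \<delta> \<longleftrightarrow>
     (\<exists>b :: nat \<Rightarrow> nat \<Rightarrow> int.
        (\<forall>j<r. b j \<in> zvecs r \<and> N (to_real (b j)) < \<delta>) \<and>
        (\<forall>v\<in>zvecs r. \<exists>!c :: nat \<Rightarrow> int. (\<forall>j\<ge>r. c j = 0) \<and>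
              v = (\<lambda>i. \<Sum>j<r. c j * b j i)))"

definition C_const :: "nat \<Rightarrow> real \<Rightarrow> real" where
  "C_const r x = 3 ^ r * x powr (- real r / 2) *
                 integral {x..} (\<lambda>u. u powr (real r / 2) * exp (- u))"

end

theory Submission
  imports Defs "HOL-Real_Asymp.Real_Asymp"
begin


lemma coord_cont: "continuous_on UNIV (\<lambda>y::nat\<Rightarrow>real. (\<Sum>i<r. \<bar>y i - x i\<bar>))"
  by (intro continuous_intros continuous_on_product_then_coordinatewise continuous_on_id)

lemma normD:
  assumes "is_norm_on r N"
  shows nD_nn: "x\<in>rvecs r \<Longrightarrow> N x \<ge> 0"
    and nD_zero: "x\<in>rvecs r \<Longrightarrow> N x = 0 \<longleftrightarrow> x = (\<lambda>_. 0)"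
    and nD_hom: "x\<in>rvecs r \<Longrightarrow> N (\<lambda>i. c * x i) = \<bar>c\<bar> * N x"
    and nD_tri: "x\<in>rvecs r \<Longrightarrow> y\<in>rvecs r \<Longrightarrow> N (\<lambda>i. x i + y i) \<le> N x + N y"
  using assms unfolding is_norm_on_def by blast+

lemma norm_basic:
  assumes N: "is_norm_on r N"
  shows "N (\<lambda>_. 0) = 0"
    and "\<And>x. x \<in> rvecs r \<Longrightarrow> N (\<lambda>i. - x i) = N x"
    and "\<And>x y. x \<in> rvecs r \<Longrightarrow> y \<in> rvecs r \<Longrightarrow> N (\<lambda>i. x i - y i) = N (\<lambda>i. y i - x i)"
proof -
  have z: "(\<lambda>_. 0::real) \<in> rvecs r" by (simp add: rvecs_def)
  show "N (\<lambda>_. 0) = 0" using nD_zero[OF N z] by blast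
  show neg: "N (\<lambda>i. - x i) = N x" if "x \<in> rvecs r" for x
    using nD_hom[OF N that, of "-1"] by simp
  fix x y :: "nat \<Rightarrow> real" assume "x \<in> rvecs r" "y \<in> rvecs r"
  hence "(\<lambda>i. y i - x i) \<in> rvecs r" by (simp add: rvecs_def)
  from neg[OF this] show "N (\<lambda>i. x i - y i) = N (\<lambda>i. y i - x i)" by simp
qed

lemma norm_upper:
  assumes N: "is_norm_on r N"
  shows "\<exists>M\<ge>0. \<forall>x\<in>rvecs r. N x \<le> M * (\<Sum>i<r. \<bar>x i\<bar>)"
proof -
  define e where "e = (\<lambda>j (i::nat). if i = j then 1 else 0::real)"
  define M where "M = (\<Sum>j<r. N (e j))"
  have e: "j < r \<Longrightarrow> e j \<in> rvecs r" for j by (auto simp: rvecs_def e_def)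
  have Nnn: "x \<in> rvecs r \<Longrightarrow> N x \<ge> 0" for x using nD_nn[OF N] by blast
  have M0: "M \<ge> 0" unfolding M_def by (intro sum_nonneg Nnn e) auto
  have eM: "j < r \<Longrightarrow> N (e j) \<le> M" for j unfolding M_def
    by (rule member_le_sum) (auto intro: Nnn e)
  have main: "n \<le> r \<Longrightarrow> N (\<lambda>i. if i < n then x i else 0) \<le> (\<Sum>i<n. \<bar>x i\<bar> * N (e i))" for n x
  proof (induction n)
    case 0 thus ?case using norm_basic(1)[OF N] by simp
  next
    case (Suc n)
    have p: "(\<lambda>i. if i < n then x i else 0) \<in> rvecs r" using Suc by (auto simp: rvecs_def)
    have q: "(\<lambda>i. x n * e n i) \<in> rvecs r" using Suc by (auto simp: rvecs_def e_def)
    have eq: "(\<lambda>i. if i < Suc n then x i else 0) = (\<lambda>i. (if i < n then x i else 0) + x n * e n i)"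
      by (rule ext) (auto simp: e_def less_Suc_eq)
    have "N (\<lambda>i. if i < Suc n then x i else 0) \<le> N (\<lambda>i. if i < n then x i else 0) + N (\<lambda>i. x n * e n i)"
      unfolding eq by (rule nD_tri[OF N p q])
    also have "N (\<lambda>i. x n * e n i) = \<bar>x n\<bar> * N (e n)" using nD_hom[OF N e[of n]] Suc by simp
    finally show ?case using Suc by simp
  qed
  show ?thesis
  proof (intro exI[of _ M] conjI ballI M0)
    fix x assume x: "x \<in> rvecs r"
    have "x = (\<lambda>i. if i < r then x i else 0)" using x by (auto simp: rvecs_def)
    hence "N x \<le> (\<Sum>i<r. \<bar>x i\<bar> * N (e i))" using main[of r x] by simp
    also have "\<dots> \<le> (\<Sum>i<r. \<bar>x i\<bar> * M)" by (intro sum_mono mult_left_mono eM) auto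
    finally show "N x \<le> M * (\<Sum>i<r. \<bar>x i\<bar>)" by (simp add: sum_distrib_left mult.commute)
  qed
qed

lemma norm_lower:
  assumes N: "is_norm_on r N" and r: "r > 0"
  shows "\<exists>c>0. \<forall>y\<in>rvecs r. c * (\<Sum>i<r. \<bar>y i\<bar>) \<le> N y"
proof -
  obtain M where M0: "M \<ge> 0" and M: "\<And>x. x\<in>rvecs r \<Longrightarrow> N x \<le> M * (\<Sum>i<r. \<bar>x i\<bar>)"
    using norm_upper[OF N] by blast
  define A where "A = (\<lambda>i::nat. if i < r then {-1..1::real} else {0})"
  define S where "S = Pi\<^sub>E UNIV A \<inter> {y. (\<Sum>i<r. \<bar>y i\<bar>) = 1}"
  have "compactin (product_topology (\<lambda>i. euclidean) UNIV) (Pi\<^sub>E UNIV A)"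
    by (subst compactin_PiE) (auto simp: A_def)
  hence cA: "compact (Pi\<^sub>E UNIV A)" by (simp add: euclidean_product_topology)
  have cl: "closed {y::nat\<Rightarrow>real. (\<Sum>i<r. \<bar>y i\<bar>) = 1}"
    by (intro closed_Collect_eq continuous_intros continuous_on_product_then_coordinatewise continuous_on_id)
  have cS: "compact S" unfolding S_def using cA cl by (rule compact_Int_closed)
  have Srv: "S \<subseteq> rvecs r" by (auto simp: S_def A_def rvecs_def PiE_iff split: if_splits)
  define e0 where "e0 = (\<lambda>i::nat. if i = 0 then 1 else 0::real)"
  have "e0 \<in> S" using r by (auto simp: S_def A_def e0_def PiE_iff)
  hence Sne: "S \<noteq> {}" by blast
  have cont: "continuous_on S N"
    unfolding continuous_on_def
  proof
    fix x assume xS: "x \<in> S"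
    hence xr: "x \<in> rvecs r" using Srv by blast
    have cc: "continuous_on UNIV (\<lambda>y::nat\<Rightarrow>real. M * (\<Sum>i<r. \<bar>y i - x i\<bar>))"
      using coord_cont[of x r] by (intro continuous_on_mult continuous_on_const)
    have t0: "((\<lambda>y. M * (\<Sum>i<r. \<bar>y i - x i\<bar>)) \<longlongrightarrow> (\<lambda>y. M * (\<Sum>i<r. \<bar>y i - x i\<bar>)) x) (at x within UNIV)"
      using cc unfolding continuous_on_def by blast
    have t: "((\<lambda>y. M * (\<Sum>i<r. \<bar>y i - x i\<bar>)) \<longlongrightarrow> (\<lambda>y. M * (\<Sum>i<r. \<bar>y i - x i\<bar>)) x) (at x within S)"
      by (rule tendsto_within_subset[OF t0]) simp
    have bnd: "norm (N y - N x) \<le> M * (\<Sum>i<r. \<bar>y i - x i\<bar>)" if yS: "y \<in> S" for y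
    proof -
        have yr: "y \<in> rvecs r" using yS Srv by blast
        have dr: "(\<lambda>i. y i - x i) \<in> rvecs r" "(\<lambda>i. x i - y i) \<in> rvecs r" using xr yr by (auto simp: rvecs_def)
        have "N y \<le> N x + N (\<lambda>i. y i - x i)"
          using nD_tri[OF N xr dr(1)] by simp
        moreover have "N x \<le> N y + N (\<lambda>i. x i - y i)"
          using nD_tri[OF N yr dr(2)] by simp
        moreover have "N (\<lambda>i. x i - y i) = N (\<lambda>i. y i - x i)" by (rule norm_basic(3)[OF N yr xr, symmetric])
        moreover have "N (\<lambda>i. y i - x i) \<le> M * (\<Sum>i<r. \<bar>y i - x i\<bar>)" using M dr by blast
        ultimately show "norm (N y - N x) \<le> M * (\<Sum>i<r. \<bar>y i - x i\<bar>)" by simp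
    qed
    have "((\<lambda>y. N y - N x) \<longlongrightarrow> 0) (at x within S)"
    proof (rule Lim_null_comparison)
      show "\<forall>\<^sub>F y in at x within S. norm (N y - N x) \<le> M * (\<Sum>i<r. \<bar>y i - x i\<bar>)"
        unfolding eventually_at_filter by (rule always_eventually) (use bnd in blast)
      show "((\<lambda>y. M * (\<Sum>i<r. \<bar>y i - x i\<bar>)) \<longlongrightarrow> 0) (at x within S)" using t by simp
    qed
    thus "(N \<longlongrightarrow> N x) (at x within S)" by (simp add: LIM_zero_iff)
  qed
  obtain y0 where y0: "y0 \<in> S" and ymin: "\<And>y. y \<in> S \<Longrightarrow> N y0 \<le> N y"
    using continuous_attains_inf[OF cS Sne cont] by blast
  have "y0 \<noteq> (\<lambda>_. 0)" using y0 by (auto simp: S_def)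
  hence c0: "N y0 > 0" using nD_zero[OF N, of y0] nD_nn[OF N, of y0] y0 Srv by force
  show ?thesis
  proof (intro exI[of _ "N y0"] conjI ballI c0)
    fix y assume yr: "y \<in> rvecs r"
    define s where "s = (\<Sum>i<r. \<bar>y i\<bar>)"
    show "N y0 * s \<le> N y"
    proof (cases "s = 0")
      case True thus ?thesis using nD_nn[OF N yr] by simp
    next
      case False
      hence s0: "s > 0" unfolding s_def by (metis sum_nonneg abs_ge_zero order_le_less)
      have le1: "\<bar>y i\<bar> \<le> s" if "i < r" for i
        unfolding s_def by (rule member_le_sum[where f="\<lambda>i. \<bar>y i\<bar>"]) (use that in auto)
      define z where "z = (\<lambda>i. (1/s) * y i)"
      have "(\<Sum>i<r. \<bar>z i\<bar>) = (1/s) * s" unfolding z_def s_def using s0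
        by (simp add: abs_mult sum_distrib_left)
      moreover have "z i \<in> A i" for i
      proof (cases "i < r")
        case True
        have "\<bar>z i\<bar> = \<bar>y i\<bar> / s" using s0 by (simp add: z_def abs_mult)
        also have "\<dots> \<le> 1" using le1[OF True] s0 by simp
        finally show ?thesis using True unfolding A_def by (simp add: abs_le_iff)
      next
        case False
        hence "y i = 0" using yr by (simp add: rvecs_def)
        thus ?thesis using False by (simp add: A_def z_def)
      qed
      ultimately have "z \<in> S" using s0 by (simp add: S_def PiE_iff)
      hence "N y0 \<le> N z" by (rule ymin)
      also have "N z = (1/s) * N y" unfolding z_def using nD_hom[OF N yr, of "1/s"] s0 by simp
      finally show ?thesis using s0 by (simp add: field_simps)
    qed
  qed
qed



definition mxn :: "nat \<Rightarrow> (nat \<Rightarrow> int) \<Rightarrow> nat" where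
  "mxn r w = Max ((\<lambda>j. nat \<bar>w j\<bar>) ` {..<r})"

lemma card_box:
  "card {w\<in>zvecs r. \<forall>j<r. \<bar>w j\<bar> \<le> int k} \<le> (2*k+1)^r"
    "finite {w\<in>zvecs r. \<forall>j<r. \<bar>w j\<bar> \<le> int k}"
proof -
  define P where "P = Pi\<^sub>E {..<r} (\<lambda>_. {-int k..int k})"
  define ext0 where "ext0 = (\<lambda>f::nat\<Rightarrow>int. (\<lambda>i. if i < r then f i else 0))"
  have sub: "{w\<in>zvecs r. \<forall>j<r. \<bar>w j\<bar> \<le> int k} \<subseteq> ext0 ` P"
  proof
    fix w assume w: "w \<in> {w\<in>zvecs r. \<forall>j<r. \<bar>w j\<bar> \<le> int k}"
    have "w = ext0 (restrict w {..<r})" using w by (auto simp: ext0_def zvecs_def)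
    moreover have "restrict w {..<r} \<in> P" using w by (auto simp: P_def abs_le_iff)
    ultimately show "w \<in> ext0 ` P" by blast
  qed
  have fP: "finite P" unfolding P_def by (intro finite_PiE) auto
  have cP: "card P = (2*k+1)^r" proof -
    have "nat (2 * int k + 1) = 2*k+1" by simp
    thus ?thesis by (simp add: card_PiE P_def)
  qed
  show "finite {w\<in>zvecs r. \<forall>j<r. \<bar>w j\<bar> \<le> int k}" using sub fP finite_subset by blast
  have "card {w\<in>zvecs r. \<forall>j<r. \<bar>w j\<bar> \<le> int k} \<le> card (ext0 ` P)"
    by (rule card_mono[OF _ sub]) (use fP in simp)
  also have "\<dots> \<le> card P" by (rule card_image_le[OF fP])
  finally show "card {w\<in>zvecs r. \<forall>j<r. \<bar>w j\<bar> \<le> int k} \<le> (2*k+1)^r" using cP by simp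
qed

lemma mxn_le: "j < r \<Longrightarrow> nat \<bar>w j\<bar> \<le> mxn r w"
  unfolding mxn_def by (rule Max_ge) auto

lemma mxn_box: "w \<in> zvecs r \<Longrightarrow> mxn r w \<le> k \<Longrightarrow> w \<in> {w\<in>zvecs r. \<forall>j<r. \<bar>w j\<bar> \<le> int k}"
  using mxn_le[of _ r w] by force

lemma mxn_pos: assumes "w \<in> zvecs r" "w \<noteq> (\<lambda>_. 0)" shows "mxn r w \<ge> 1"
proof -
  obtain j where "w j \<noteq> 0" using assms(2) by auto
  moreover have "j < r" using assms calculation by (auto simp: zvecs_def)
  ultimately show ?thesis using mxn_le[of j r w] by linarith
qed

lemma geom_half: "(\<Sum>k\<in>{2..K}. (1/2::real)^k) \<le> 1/2"
proof -
  have aux: "K \<ge> 1 \<Longrightarrow> (\<Sum>k\<in>{2..K}. (1/2::real)^k) \<le> 1/2 - (1/2)^K" for K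
  proof (induction K)
    case 0 thus ?case by simp
  next
    case (Suc K)
    show ?case
    proof (cases "K = 0")
      case True thus ?thesis by simp
    next
      case False
      hence "{2..Suc K} = insert (Suc K) {2..K}" using Suc by auto
      hence "(\<Sum>k\<in>{2..Suc K}. (1/2::real)^k) = (1/2)^(Suc K) + (\<Sum>k\<in>{2..K}. (1/2::real)^k)"
        by simp
      also have "\<dots> \<le> (1/2)^(Suc K) + (1/2 - (1/2)^K)" using Suc False by simp
      finally show ?thesis by simp
    qed
  qed
  show ?thesis
  proof (cases "K = 0")
    case True thus ?thesis by simp
  next
    case False
    have "(1/2::real)^K \<ge> 0" by simp
    with aux[of K] False show ?thesis by linarith
  qed
qed

lemma term_bound:
  fixes X :: real
  assumes X: "2 * real r + 1 \<le> X" and k: "k \<ge> 2"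
  shows "real ((2*k+1)^r) * exp (- X * (real k)^2) \<le> exp (-X) * (1/2)^k"
proof -
  have "real (2*k+1) \<le> exp (2 * real k)" using exp_ge_add_one_self[of "2*real k"] by simp
  hence "real ((2*k+1)^r) \<le> exp (2*real k) ^ r" by (simp add: power_mono)
  also have "\<dots> = exp (2 * real k * real r)" by (simp add: exp_of_nat_mult[symmetric] mult.commute)
  finally have a: "real ((2*k+1)^r) \<le> exp (2 * real k * real r)" .
  have kk: "(real k)^2 \<ge> real k + 1"
  proof -
    have k2: "real k \<ge> 2" using k by simp
    have "2 * real k \<le> real k * real k" by (rule mult_right_mono[OF k2]) simp
    thus ?thesis using k2 unfolding power2_eq_square by linarith
  qed
  have X0: "X \<ge> 0" using X by simp
  have "X * (real k + 1) \<le> X * (real k)^2" using kk X0 by (rule mult_left_mono)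
  moreover have "(2 * real r + 1) * real k \<le> X * real k" using X by (intro mult_right_mono) auto
  ultimately have b: "2 * real k * real r - X * (real k)^2 \<le> - X - real k" by (simp add: algebra_simps)
  have "real ((2*k+1)^r) * exp (- X * (real k)^2) \<le> exp (2 * real k * real r) * exp (- X * (real k)^2)"
    using a by (intro mult_right_mono) auto
  also have "\<dots> = exp (2 * real k * real r - X * (real k)^2)" by (simp add: exp_add[symmetric])
  also have "\<dots> \<le> exp (- X - real k)" using b by simp
  also have "\<dots> = exp (-X) * exp (-1) ^ k" by (simp add: exp_diff exp_minus exp_of_nat_mult[symmetric] field_simps)
  also have "\<dots> \<le> exp (-X) * (1/2)^k"
  proof -
    have "exp (-1::real) \<le> 1/2" using exp_ge_add_one_self[of 1] by (simp add: exp_minus field_simps)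
    thus ?thesis by (intro mult_left_mono power_mono) auto
  qed
  finally show ?thesis .
qed

lemma count_sum:
  fixes X :: real
  assumes X: "2 * real r + 1 \<le> X" and F: "finite F" "F \<subseteq> zvecs r - {\<lambda>_. 0}"
  shows "(\<Sum>w\<in>F. exp (- X * (real (mxn r w))^2)) \<le> 3^r * exp (-X)"
proof (cases "F = {}")
  case True thus ?thesis by simp
next
  case False
  define K where "K = Max (mxn r ` F)"
  obtain w0 where w0: "w0 \<in> F" using False by blast
  have "mxn r w0 \<ge> 1" using F w0 mxn_pos by blast
  moreover have "mxn r w0 \<le> K" unfolding K_def using F w0 by (intro Max_ge) auto
  ultimately have K1: "K \<ge> 1" by linarith
  have img: "mxn r ` F \<subseteq> {1..K}"
  proof (rule image_subsetI)
    fix w assume w: "w \<in> F"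
    have "w \<in> zvecs r" "w \<noteq> (\<lambda>_. 0)" using F w by auto
    hence "mxn r w \<ge> 1" by (rule mxn_pos)
    moreover have "mxn r w \<le> K" unfolding K_def using F w by (intro Max_ge) auto
    ultimately show "mxn r w \<in> {1..K}" by simp
  qed
  define h where "h = (\<lambda>k::nat. exp (- X * (real k)^2))"
  define B where "B = (\<lambda>k. {w\<in>zvecs r. \<forall>j<r. \<bar>w j\<bar> \<le> int k})"
  have "(\<Sum>w\<in>F. h (mxn r w)) = (\<Sum>k\<in>{1..K}. \<Sum>w\<in>{w\<in>F. mxn r w = k}. h (mxn r w))"
    by (rule sum.group[symmetric]) (use F img in auto)
  also have "\<dots> = (\<Sum>k\<in>{1..K}. real (card {w\<in>F. mxn r w = k}) * h k)" by simp
  also have "{1..K} = insert 1 {2..K}" using K1 by auto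
  also have "(\<Sum>k\<in>insert 1 {2..K}. real (card {w\<in>F. mxn r w = k}) * h k)
      = real (card {w\<in>F. mxn r w = 1}) * h 1 + (\<Sum>k\<in>{2..K}. real (card {w\<in>F. mxn r w = k}) * h k)"
    by simp
  also have "\<dots> \<le> (3^r - 1) * h 1 + (\<Sum>k\<in>{2..K}. exp (-X) * (1/2)^k)"
  proof (intro add_mono sum_mono)
    have sub1: "{w\<in>F. mxn r w = 1} \<subseteq> B 1 - {\<lambda>_. 0}"
    proof
      fix w assume w: "w \<in> {w\<in>F. mxn r w = 1}"
      hence "w \<in> zvecs r" "w \<noteq> (\<lambda>_. 0)" "mxn r w \<le> 1" using F by auto
      thus "w \<in> B 1 - {\<lambda>_. 0}" using mxn_box[of w r 1] unfolding B_def by simp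
    qed
    have z: "(\<lambda>_. 0) \<in> B 1" by (auto simp: B_def zvecs_def)
    have "card {w\<in>F. mxn r w = 1} \<le> card (B 1 - {\<lambda>_. 0})"
      by (rule card_mono[OF _ sub1]) (use card_box(2)[of r 1] in \<open>simp add: B_def\<close>)
    also have "\<dots> = card (B 1) - 1" using z card_box(2)[of r 1] by (simp add: B_def)
    also have "\<dots> \<le> 3^r - 1" using card_box(1)[of r 1] by (simp add: B_def)
    finally have "real (card {w\<in>F. mxn r w = 1}) \<le> real (3^r - 1::nat)" by linarith
    also have "\<dots> = 3^r - 1" by (simp add: of_nat_diff)
    finally show "real (card {w\<in>F. mxn r w = 1}) * h 1 \<le> (3^r - 1) * h 1"
      by (intro mult_right_mono) (auto simp: h_def)
  next
    fix k assume k: "k \<in> {2..K}"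
    have sub: "{w\<in>F. mxn r w = k} \<subseteq> B k"
    proof
      fix w assume w: "w \<in> {w\<in>F. mxn r w = k}"
      hence "w \<in> zvecs r" "mxn r w \<le> k" using F by auto
      thus "w \<in> B k" using mxn_box[of w r k] unfolding B_def by simp
    qed
    have "card {w\<in>F. mxn r w = k} \<le> card (B k)"
      by (rule card_mono[OF _ sub]) (use card_box(2)[of r k] in \<open>simp add: B_def\<close>)
    also have "\<dots> \<le> (2*k+1)^r" using card_box(1)[of r k] by (simp add: B_def)
    finally have "real (card {w\<in>F. mxn r w = k}) \<le> real ((2*k+1)^r)" by (simp only: of_nat_le_iff)
    hence "real (card {w\<in>F. mxn r w = k}) * h k \<le> real ((2*k+1)^r) * h k"
      by (intro mult_right_mono) (auto simp: h_def)
    also have "\<dots> \<le> exp (-X) * (1/2)^k" unfolding h_def using term_bound[OF X] k by auto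
    finally show "real (card {w\<in>F. mxn r w = k}) * h k \<le> exp (-X) * (1/2)^k" .
  qed
  also have "(\<Sum>k\<in>{2..K}. exp (-X) * (1/2::real)^k) = exp (-X) * (\<Sum>k\<in>{2..K}. (1/2::real)^k)"
    by (simp add: sum_distrib_left)
  also have "\<dots> \<le> exp (-X) * 1" using geom_half[of K] by (intro mult_left_mono) auto
  finally show ?thesis by (simp add: h_def algebra_simps)
qed



lemma sum_delta_int: "k < (r::nat) \<Longrightarrow> (\<Sum>j<r. (if j = k then 1 else 0) * (f j::int)) = f k"
proof -
  assume k: "k < r"
  have "(\<Sum>j<r. (if j = k then 1 else 0) * (f j::int)) = (\<Sum>j<r. if j = k then f j else 0)"
    by (rule sum.cong) auto
  also have "\<dots> = f k" using k by (subst sum.delta) auto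
  finally show ?thesis .
qed

lemma sum_delta_int2: "k < (r::nat) \<Longrightarrow> (\<Sum>j<r. (f j::int) * (if j = k then 1 else 0)) = f k"
  using sum_delta_int[of k r f] by (simp add: mult.commute)

lemma per_d:
  fixes r :: nat and N :: "(nat \<Rightarrow> real) \<Rightarrow> real" and \<delta> X :: real
  assumes N: "is_norm_on r N" and r: "r > 0" and \<delta>: "\<delta> > 0"
    and sb: "has_short_basis r N \<delta>" and Xd: "X = pi / \<delta>^2" and X: "2 * real r + 1 \<le> X"
  shows "0 < h1_theta r N \<and> h1_theta r N < exp (h1_theta r N) - 1
         \<and> exp (h1_theta r N) - 1 \<le> 3^r * exp (-X)"
proof -
  obtain b where bz: "\<And>j. j<r \<Longrightarrow> b j \<in> zvecs r \<and> N (to_real (b j)) < \<delta>"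
    and rep: "\<forall>v\<in>zvecs r. \<exists>!c :: nat \<Rightarrow> int. (\<forall>j\<ge>r. c j = 0) \<and> v = (\<lambda>i. \<Sum>j<r. c j * b j i)"
    using sb unfolding has_short_basis_def by blast
  define ip where "ip = (\<lambda>(\<phi>::nat\<Rightarrow>int) j. (\<Sum>i<r. \<phi> i * b j i))"
  define T where "T = (\<lambda>\<phi> (j::nat). if j < r then ip \<phi> j else 0)"
  define ek where "ek = (\<lambda>k (i::nat). if i = k then 1 else (0::int))"
  have ekz: "k < r \<Longrightarrow> ek k \<in> zvecs r" for k by (auto simp: ek_def zvecs_def)
  have z0: "(\<lambda>_. 0::int) \<in> zvecs r" by (simp add: zvecs_def)
  have bnz: "b j \<noteq> (\<lambda>_. 0)" if j: "j < r" for j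
  proof
    assume bj0: "b j = (\<lambda>_. 0)"
    define Q where "Q = (\<lambda>c::nat\<Rightarrow>int. (\<forall>j\<ge>r. c j = 0) \<and> (\<lambda>_. 0::int) = (\<lambda>i. \<Sum>j<r. c j * b j i))"
    from rep z0 have u: "\<exists>!c. Q c" unfolding Q_def by blast
    have p1: "Q (\<lambda>_. 0)" by (simp add: Q_def)
    have p2: "Q (ek j)"
      using j bj0 by (auto simp: Q_def ek_def sum_delta_int[OF j, of "\<lambda>j'. b j' _"])
    have "(\<lambda>_. 0::int) = ek j" using u p1 p2 unfolding Ex1_def by blast
    hence "(0::int) = ek j j" by (rule fun_cong)
    thus False by (simp add: ek_def)
  qed
  have coord: "\<phi> k = (\<Sum>j<r. c j * ip \<phi> j)"
    if k: "k < r" and c: "ek k = (\<lambda>i. \<Sum>j<r. c j * b j i)" for \<phi> k c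
  proof -
    have "\<phi> k = (\<Sum>i<r. \<phi> i * ek k i)" using sum_delta_int2[OF k, of \<phi>] by (simp add: ek_def)
    also have "\<dots> = (\<Sum>i<r. \<phi> i * (\<Sum>j<r. c j * b j i))" using c by simp
    also have "\<dots> = (\<Sum>i<r. \<Sum>j<r. c j * (\<phi> i * b j i))" by (simp add: sum_distrib_left mult_ac)
    also have "\<dots> = (\<Sum>j<r. \<Sum>i<r. c j * (\<phi> i * b j i))" by (rule sum.swap)
    also have "\<dots> = (\<Sum>j<r. c j * ip \<phi> j)" by (simp add: ip_def sum_distrib_left)
    finally show ?thesis .
  qed
  have inj: "inj_on T (zvecs r)"
  proof (rule inj_onI)
    fix \<phi> \<psi> assume \<phi>: "\<phi> \<in> zvecs r" and \<psi>: "\<psi> \<in> zvecs r" and eq: "T \<phi> = T \<psi>"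
    have ipe: "ip \<phi> j = ip \<psi> j" if "j < r" for j using fun_cong[OF eq, of j] that by (simp add: T_def)
    show "\<phi> = \<psi>"
    proof
      fix k show "\<phi> k = \<psi> k"
      proof (cases "k < r")
        case True
        obtain c where "(\<forall>j\<ge>r. c j = 0) \<and> ek k = (\<lambda>i. \<Sum>j<r. c j * b j i)"
          using rep ekz[OF True] by blast
        hence c: "ek k = (\<lambda>i. \<Sum>j<r. c j * b j i)" by blast
        show ?thesis unfolding coord[OF True c, of \<phi>] coord[OF True c, of \<psi>] using ipe by simp
      next
        case False thus ?thesis using \<phi> \<psi> by (simp add: zvecs_def)
      qed
    qed
  qed
  have Tz: "T \<phi> \<in> zvecs r" for \<phi> by (simp add: T_def zvecs_def)
  have T0: "T (\<lambda>_. 0) = (\<lambda>_. 0)" by (rule ext) (simp add: T_def ip_def)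
  have TZ0: "T \<phi> \<in> zvecs r - {\<lambda>_. 0}" if "\<phi> \<in> zvecs r - {\<lambda>_. 0}" for \<phi>
  proof -
    have "T \<phi> \<noteq> T (\<lambda>_. 0)" using that inj z0 by (metis DiffE inj_onD singletonI)
    thus ?thesis using Tz T0 by simp
  qed
  obtain c0 where c0: "c0 > 0" and c0b: "\<And>y. y\<in>rvecs r \<Longrightarrow> c0 * (\<Sum>i<r. \<bar>y i\<bar>) \<le> N y"
    using norm_lower[OF N r] by blast
  define D where "D = (\<lambda>\<phi>::nat\<Rightarrow>real. {\<bar>\<Sum>i<r. \<phi> i * x i\<bar> | x. x \<in> rvecs r \<and> N x \<le> 1})"
  have dnD: "dual_norm r N \<phi> = Sup (D \<phi>)" for \<phi> by (simp add: dual_norm_def D_def)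
  have zr: "(\<lambda>_. 0::real) \<in> rvecs r" by (simp add: rvecs_def)
  have N0: "N (\<lambda>_. 0) = 0" by (rule norm_basic(1)[OF N])
  have zD: "0 \<in> D \<phi>" for \<phi> unfolding D_def using zr N0 by force
  have bddD: "bdd_above (D \<phi>)" for \<phi>
  proof (rule bdd_aboveI)
    define A where "A = (\<Sum>i<r. \<bar>\<phi> i\<bar>)"
    have A0: "A \<ge> 0" unfolding A_def by (simp add: sum_nonneg)
    fix t assume "t \<in> D \<phi>"
    then obtain x where x: "x \<in> rvecs r" "N x \<le> 1" and t: "t = \<bar>\<Sum>i<r. \<phi> i * x i\<bar>" unfolding D_def by blast
    have "t \<le> (\<Sum>i<r. \<bar>\<phi> i\<bar> * \<bar>x i\<bar>)" unfolding t by (rule order_trans[OF sum_abs]) (simp add: abs_mult)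
    also have "\<dots> \<le> (\<Sum>i<r. A * \<bar>x i\<bar>)"
    proof (rule sum_mono)
      fix i assume "i \<in> {..<r}"
      hence "\<bar>\<phi> i\<bar> \<le> A" unfolding A_def by (intro member_le_sum) auto
      thus "\<bar>\<phi> i\<bar> * \<bar>x i\<bar> \<le> A * \<bar>x i\<bar>" by (intro mult_right_mono) auto
    qed
    also have "\<dots> = A * (\<Sum>i<r. \<bar>x i\<bar>)" by (simp add: sum_distrib_left)
    also have "\<dots> \<le> A * (1 / c0)"
    proof (intro mult_left_mono A0)
      have "c0 * (\<Sum>i<r. \<bar>x i\<bar>) \<le> 1" using c0b[OF x(1)] x(2) by linarith
      thus "(\<Sum>i<r. \<bar>x i\<bar>) \<le> 1 / c0" using c0 by (simp add: field_simps mult.commute)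
    qed
    finally show "t \<le> A * (1 / c0)" .
  qed
  have dn_nn: "dual_norm r N \<phi> \<ge> 0" for \<phi> unfolding dnD by (rule cSup_upper[OF zD bddD])
  have dn0: "dual_norm r N (to_real (\<lambda>_. 0)) = 0"
  proof -
    have "D (to_real (\<lambda>_. 0)) = {0}" using zD by (auto simp: D_def to_real_def)
    thus ?thesis unfolding dnD by simp
  qed
  have dn_lb: "\<bar>real_of_int (ip \<phi> j)\<bar> / \<delta> \<le> dual_norm r N (to_real \<phi>)" if j: "j < r" for \<phi> j
  proof -
    define bj where "bj = to_real (b j)"
    have bjr: "bj \<in> rvecs r" using bz[OF j] by (simp add: bj_def to_real_def zvecs_def rvecs_def)
    have "bj \<noteq> (\<lambda>_. 0)"
    proof
      assume "bj = (\<lambda>_. 0)"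
      hence "b j = (\<lambda>_. 0)" by (auto simp: bj_def to_real_def fun_eq_iff)
      thus False using bnz[OF j] by blast
    qed
    hence nb: "N bj > 0" using nD_zero[OF N bjr] nD_nn[OF N bjr] by linarith
    have nbd: "N bj < \<delta>" using bz[OF j] by (simp add: bj_def)
    define y where "y = (\<lambda>i. (1 / N bj) * bj i)"
    have yr: "y \<in> rvecs r" using bjr by (simp add: y_def rvecs_def)
    have Ny: "N y = 1" unfolding y_def using nD_hom[OF N bjr, of "1 / N bj"] nb by simp
    have "(\<Sum>i<r. to_real \<phi> i * y i) = (1 / N bj) * real_of_int (ip \<phi> j)"
      by (simp add: y_def bj_def to_real_def ip_def sum_distrib_left mult_ac)
    hence el: "\<bar>real_of_int (ip \<phi> j)\<bar> / N bj \<in> D (to_real \<phi>)"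
      unfolding D_def using yr Ny nb by (auto simp: abs_mult intro!: exI[of _ y])
    have "\<bar>real_of_int (ip \<phi> j)\<bar> / \<delta> \<le> \<bar>real_of_int (ip \<phi> j)\<bar> / N bj"
      using nb nbd by (intro divide_left_mono) auto
    also have "\<dots> \<le> dual_norm r N (to_real \<phi>)" unfolding dnD by (rule cSup_upper[OF el bddD])
    finally show ?thesis .
  qed
  define g where "g = (\<lambda>v. exp (- pi * (dual_norm r N (to_real v))\<^sup>2))"
  define hh where "hh = (\<lambda>w. exp (- X * (real (mxn r w))^2))"
  have g_le: "g \<phi> \<le> hh (T \<phi>)" for \<phi>
  proof -
    have "mxn r (T \<phi>) \<in> (\<lambda>j. nat \<bar>T \<phi> j\<bar>) ` {..<r}" unfolding mxn_def using r by (intro Max_in) auto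
    then obtain j0 where j0: "j0 < r" and mj: "mxn r (T \<phi>) = nat \<bar>T \<phi> j0\<bar>" by auto
    have m: "real (mxn r (T \<phi>)) = \<bar>real_of_int (ip \<phi> j0)\<bar>" using j0 mj by (simp add: T_def)
    define m' where "m' = real (mxn r (T \<phi>))"
    have m'0: "m' \<ge> 0" by (simp add: m'_def)
    have "m' / \<delta> \<le> dual_norm r N (to_real \<phi>)" using dn_lb[OF j0, of \<phi>] m by (simp add: m'_def)
    hence "(m' / \<delta>)^2 \<le> (dual_norm r N (to_real \<phi>))^2" using m'0 \<delta> by (intro power_mono) auto
    hence "m'^2 / \<delta>^2 \<le> (dual_norm r N (to_real \<phi>))^2" by (simp add: power_divide)
    hence "pi * (m'^2 / \<delta>^2) \<le> pi * (dual_norm r N (to_real \<phi>))^2"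
      by (intro mult_left_mono) auto
    hence "X * m'^2 \<le> pi * (dual_norm r N (to_real \<phi>))^2" unfolding Xd by simp
    thus ?thesis unfolding g_def hh_def m'_def by simp
  qed
  have g_pos: "g \<phi> > 0" for \<phi> by (simp add: g_def)
  define Z0 where "Z0 = zvecs r - {\<lambda>_. 0}"
  have fin_bound: "sum g F \<le> 3^r * exp (-X)" if F: "finite F" "F \<subseteq> Z0" for F
  proof -
    have "sum g F \<le> (\<Sum>\<phi>\<in>F. hh (T \<phi>))" by (intro sum_mono g_le)
    also have "\<dots> = (\<Sum>w\<in>T ` F. hh w)"
      using inj F by (subst sum.reindex) (auto simp: Z0_def intro: inj_on_subset)
    also have "\<dots> \<le> 3^r * exp (-X)" unfolding hh_def
      using TZ0 F by (intro count_sum[OF X]) (auto simp: Z0_def)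
    finally show ?thesis .
  qed
  have summ: "g summable_on Z0"
  proof (rule nonneg_bdd_above_summable_on)
    show "\<And>x. x \<in> Z0 \<Longrightarrow> 0 \<le> g x" using g_pos less_imp_le by blast
    show "bdd_above (sum g ` {F. F \<subseteq> Z0 \<and> finite F})"
      by (rule bdd_aboveI[where M="3^r * exp(-X)"]) (use fin_bound in auto)
  qed
  have S0le: "infsum g Z0 \<le> 3^r * exp (-X)" by (rule infsum_le_finite_sums[OF summ fin_bound])
  define e0 where "e0 = ek 0"
  have e0Z: "e0 \<in> Z0" using r by (auto simp: e0_def ek_def Z0_def zvecs_def fun_eq_iff)
  have "g e0 = infsum g {e0}" by simp
  also have "\<dots> \<le> infsum g Z0"
    by (rule infsum_mono_neutral) (use summ e0Z g_pos in \<open>auto intro: less_imp_le\<close>)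
  finally have S0pos: "infsum g Z0 > 0" using g_pos[of e0] by linarith
  have zv: "zvecs r = insert (\<lambda>_. 0) Z0" using z0 by (auto simp: Z0_def)
  have g0: "g (\<lambda>_. 0) = 1" by (simp add: g_def dn0)
  have tot: "infsum g (zvecs r) = 1 + infsum g Z0"
    unfolding zv by (subst infsum_insert[OF summ]) (auto simp: Z0_def g0)
  have h1: "h1_theta r N = ln (1 + infsum g Z0)"
    unfolding h1_theta_def h0_theta_def using tot by (simp add: g_def)
  have eh: "exp (h1_theta r N) - 1 = infsum g Z0" unfolding h1 using S0pos by simp
  show ?thesis
    unfolding eh using S0pos S0le ln_add_one_self_less_self[OF S0pos] unfolding h1 by simp
qed



lemma int_facts:
  fixes x a :: real
  assumes x: "x > 0" and a: "a \<ge> 0" and ax: "2*a < x"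
  shows "(\<lambda>u. u powr a * exp (-u)) integrable_on {x..}"
   and "x powr a * exp (-x) \<le> integral {x..} (\<lambda>u. u powr a * exp (-u))"
   and "integral {x..} (\<lambda>u. u powr a * exp (-u)) < 2 * (x powr a * exp(-x))"
proof -
  define l where "l = 1 - a/x"
  have l: "l > 1/2" using x ax by (simp add: l_def field_simps)
  define g where "g = (\<lambda>u. x powr a * exp ((l-1)*x) * exp (-l*u))"
  have gI: "(g has_integral (x powr a * exp ((l-1)*x) * (exp (-l*x)/l))) {x..}"
    unfolding g_def by (intro has_integral_mult_right has_integral_exp_minus_to_infinity) (use l in auto)
  have gval: "x powr a * exp ((l-1)*x) * (exp (-l*x)/l) = x powr a * exp (-x) / l"
    by (simp add: exp_add[symmetric] algebra_simps)
  have bound: "u powr a * exp (-u) \<le> g u" if u: "u \<ge> x" for u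
  proof -
    have u0: "u > 0" using u x by simp
    have "ln (u/x) \<le> u/x - 1" using u0 x by (intro ln_le_minus_one) simp
    hence "ln u \<le> ln x + (u/x - 1)" using u0 x by (simp add: ln_div)
    hence "a * ln u \<le> a * (ln x + (u/x - 1))" using a by (rule mult_left_mono)
    hence "exp (a * ln u - u) \<le> exp (a * ln x + (l-1)*x - l*u)"
      using x by (simp add: l_def field_simps)
    thus ?thesis using u0 x unfolding g_def
      by (simp add: powr_def exp_add[symmetric] exp_diff algebra_simps)
  qed
  have meas: "(\<lambda>u. u powr a * exp (-u)) \<in> borel_measurable (lebesgue_on {x..})"
    by (intro continuous_imp_measurable_on_sets_lebesgue continuous_intros) (use x in auto)
  show int: "(\<lambda>u. u powr a * exp (-u)) integrable_on {x..}"
    by (rule measurable_bounded_by_integrable_imp_integrable[OF meas])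
       (use gI bound x in \<open>auto simp: has_integral_integrable\<close>)
  have "integral {x..} (\<lambda>u. u powr a * exp (-u)) \<le> integral {x..} g"
    by (rule integral_le[OF int]) (use gI bound in \<open>auto simp: has_integral_integrable\<close>)
  also have "\<dots> = x powr a * exp (-x) / l" using gI gval by (simp add: integral_unique)
  also have "\<dots> < 2 * (x powr a * exp(-x))"
    using l x by (simp add: field_simps)
  finally show "integral {x..} (\<lambda>u. u powr a * exp (-u)) < 2 * (x powr a * exp(-x))" .
  have hI: "((\<lambda>u. x powr a * exp (-1*u)) has_integral (x powr a * (exp (-1*x)/1))) {x..}"
    by (intro has_integral_mult_right has_integral_exp_minus_to_infinity) auto
  have "x powr a * exp (-x) = integral {x..} (\<lambda>u. x powr a * exp (-1*u))"
    using integral_unique[OF hI] by (simp only: mult_minus_left mult_1 div_by_1)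
  also have "\<dots> \<le> integral {x..} (\<lambda>u. u powr a * exp (-u))"
    by (rule integral_le) (use hI int x a in \<open>auto simp: has_integral_integrable intro: powr_mono2\<close>)
  finally show "x powr a * exp (-x) \<le> integral {x..} (\<lambda>u. u powr a * exp (-u))" .
qed



lemma C_bounds:
  assumes X: "X > 0" and rX: "real r < X"
  shows "3^r * exp(-X) \<le> C_const r X" and "C_const r X < 2 * 3^r * exp(-X)"
proof -
  define a where "a = real r / 2"
  have a0: "a \<ge> 0" and aX: "2*a < X" using rX by (auto simp: a_def)
  note f = int_facts[OF X a0 aX]
  define I where "I = integral {X..} (\<lambda>u. u powr a * exp (-u))"
  have C: "C_const r X = 3^r * X powr (-a) * I" by (simp add: C_const_def a_def I_def)
  have pp: "X powr (-a) * X powr a = 1" using X by (simp add: powr_add[symmetric])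
  have pa: "X powr (-a) > 0" using X by simp
  have "3^r * exp(-X) = 3^r * X powr (-a) * (X powr a * exp (-X))" using pp by (simp add: algebra_simps)
  also have "\<dots> \<le> 3^r * X powr (-a) * I" using f(2) pa unfolding I_def by (intro mult_left_mono) auto
  finally show "3^r * exp(-X) \<le> C_const r X" using C by simp
  have "3^r * X powr (-a) * I < 3^r * X powr (-a) * (2 * (X powr a * exp(-X)))"
    using f(3) pa unfolding I_def by (intro mult_strict_left_mono) auto
  also have "\<dots> = 2 * 3^r * exp(-X)" using pp by (simp add: algebra_simps)
  finally show "C_const r X < 2 * 3^r * exp(-X)" using C by simp
qed

lemma growth:
  fixes \<epsilon> K :: real and m :: nat
  assumes e: "\<epsilon> > 0"
  shows "eventually (\<lambda>d::nat. 2 * K * (1 + real d)^m + 1 \<le> pi * exp (2 * \<epsilon> * real d)) sequentially"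
proof -
  define h where "h = (\<lambda>d::nat. 2 * \<epsilon> * (1 + real d))"
  have hlim: "filterlim h at_top sequentially" unfolding h_def using e by real_asymp
  have g0: "((\<lambda>d. h d ^ m / exp (h d)) \<longlongrightarrow> 0) sequentially"
    by (rule filterlim_compose[OF tendsto_power_div_exp_0 hlim])
  define c where "c = exp (2*\<epsilon>) / (2*\<epsilon>)^m"
  have feq: "(1 + real d)^m / exp (2 * \<epsilon> * real d) = c * (h d ^ m / exp (h d))" for d
  proof -
    have hm: "h d ^ m = (2*\<epsilon>)^m * (1+real d)^m" by (simp add: h_def power_mult_distrib)
    have he: "exp (h d) = exp (2*\<epsilon>) * exp (2*\<epsilon>*real d)" by (simp add: h_def exp_add[symmetric] algebra_simps)
    have nz: "(2*\<epsilon>)^m \<noteq> 0" using e by simp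
    show ?thesis unfolding hm he c_def using nz by (simp add: field_simps)
  qed
  have "((\<lambda>d. c * (h d ^ m / exp (h d))) \<longlongrightarrow> c * 0) sequentially" by (intro tendsto_intros g0)
  hence flim: "((\<lambda>d. (1 + real d)^m / exp (2 * \<epsilon> * real d)) \<longlongrightarrow> 0) sequentially" using feq by simp
  define B where "B = 1 / (2 * \<bar>K\<bar> + 1)"
  have B0: "B > 0" by (simp add: B_def add_pos_nonneg)
  have ev: "eventually (\<lambda>d. (1 + real d)^m / exp (2 * \<epsilon> * real d) < B) sequentially"
    using order_tendstoD(2)[OF flim B0] .
  show ?thesis
  proof (rule eventually_mono[OF ev])
    fix d :: nat assume lt: "(1 + real d)^m / exp (2 * \<epsilon> * real d) < B"
    define E where "E = exp (2 * \<epsilon> * real d)"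
    have E1: "E \<ge> 1" unfolding E_def using e by simp
    have P0: "(1 + real d)^m \<ge> 0" by simp
    have "(1 + real d)^m < B * E" using lt E1 by (simp add: E_def field_simps)
    hence "(2 * \<bar>K\<bar> + 1) * (1 + real d)^m \<le> (2 * \<bar>K\<bar> + 1) * (B * E)"
      by (intro mult_left_mono) auto
    also have "\<dots> = E" by (simp add: B_def add_pos_nonneg)
    finally have a: "(2 * \<bar>K\<bar> + 1) * (1 + real d)^m \<le> E" .
    have "2 * K * (1 + real d)^m \<le> 2 * \<bar>K\<bar> * (1 + real d)^m" using P0 by (intro mult_right_mono) auto
    also have "\<dots> \<le> E" using a P0 by (simp add: algebra_simps) (smt (verit) P0)
    finally have "2 * K * (1 + real d)^m + 1 \<le> 2 * E" using E1 by linarith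
    also have "\<dots> \<le> pi * E" using E1 pi_gt3 by (intro mult_right_mono) auto
    finally show "2 * K * (1 + real d)^m + 1 \<le> pi * exp (2 * \<epsilon> * real d)" by (simp add: E_def)
  qed
qed

theorem mainTheorem5:
  fixes r :: "nat \<Rightarrow> nat"
    and N :: "nat \<Rightarrow> (nat \<Rightarrow> real) \<Rightarrow> real"
    and \<epsilon> :: real and K :: real and m :: nat
  assumes norms: "\<And>d. is_norm_on (r d) (N d)"
    and eps_pos: "\<epsilon> > 0"
    and short: "eventually (\<lambda>d. has_short_basis (r d) (N d) (exp (- \<epsilon> * real d))) sequentially"
    and rank_pos: "eventually (\<lambda>d. r d > 0) sequentially"
    and rank_poly: "\<And>d. real (r d) \<le> K * (1 + real d) ^ m"
  shows "eventually (\<lambda>d. 0 < h1_theta (r d) (N d)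
                        \<and> h1_theta (r d) (N d) < exp (h1_theta (r d) (N d)) - 1
                        \<and> exp (h1_theta (r d) (N d)) - 1
                             \<le> C_const (r d) (pi * exp (2 * \<epsilon> * real d))) sequentially
       \<and> eventually (\<lambda>d. C_const (r d) (pi * exp (2 * \<epsilon> * real d))
                        < 2 * 3 ^ (r d) * exp (- pi * exp (2 * \<epsilon> * real d))) sequentially"
proof -
  have cond: "eventually (\<lambda>d. 2 * real (r d) + 1 \<le> pi * exp (2 * \<epsilon> * real d)) sequentially"
  proof (rule eventually_mono[OF growth[OF eps_pos, of K m]])
    fix d assume "2 * K * (1 + real d)^m + 1 \<le> pi * exp (2 * \<epsilon> * real d)"
    thus "2 * real (r d) + 1 \<le> pi * exp (2 * \<epsilon> * real d)" using rank_poly[of d] by linarith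
  qed
  have Xeq: "pi / (exp (- \<epsilon> * real d))^2 = pi * exp (2 * \<epsilon> * real d)" for d
  proof -
    have "(exp (- \<epsilon> * real d))^2 = exp (- (2 * \<epsilon> * real d))"
      by (simp add: power2_eq_square exp_add[symmetric])
    thus ?thesis by (simp add: exp_minus field_simps)
  qed
  have X0: "pi * exp (2 * \<epsilon> * real d) > 0" for d by simp
  show ?thesis
  proof
    show "eventually (\<lambda>d. 0 < h1_theta (r d) (N d)
                        \<and> h1_theta (r d) (N d) < exp (h1_theta (r d) (N d)) - 1
                        \<and> exp (h1_theta (r d) (N d)) - 1
                             \<le> C_const (r d) (pi * exp (2 * \<epsilon> * real d))) sequentially"
      using short rank_pos cond
    proof eventually_elim
      case (elim d)
      note pd = per_d[OF norms[of d] elim(2) exp_gt_zero elim(1) Xeq[symmetric] elim(3)]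
      have "3 ^ r d * exp (- (pi * exp (2 * \<epsilon> * real d))) \<le> C_const (r d) (pi * exp (2 * \<epsilon> * real d))"
        by (rule C_bounds(1)[OF X0]) (use elim(3) in linarith)
      thus ?case using pd by linarith
    qed
    show "eventually (\<lambda>d. C_const (r d) (pi * exp (2 * \<epsilon> * real d))
                        < 2 * 3 ^ (r d) * exp (- pi * exp (2 * \<epsilon> * real d))) sequentially"
      using cond
    proof eventually_elim
      case (elim d)
      show ?case using C_bounds(2)[OF X0, of "r d" d] elim by simp
    qed
  qed
qed

end
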